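(* There exists no binary orthogonal array of parameters $(n,M,\tau)=(9,96,4)$, i.e. of length $9$, cardinality $96=6\cdot 2^4$ and strength $4$.
   Context: A binary orthogonal array of parameters $(n,M,\tau)$ is the multiset of rows of an $M\times n$ binary matrix such that every $M\times\tau$ submatrix contains each ordered $\tau$-tuple of $\{0,1\}^\tau$ exactly $M/2^\tau$ times as rows. *)

theory Defs
  imports Main "HOL-Library.Multiset"
begin

text \<open>A binary orthogonal array with parameters (n, M, tau): a multiset of M rows,
each a binary word (bool list) of length n, such that for every choice of tau
distinct columns (listed increasingly), every binary tau-tuple occurs as the
restriction of exactly M / 2^tau rows (stated multiplicatively, which also
encodes that 2^tau divides M).\<close>

definition restrict_cols :: "nat list \<Rightarrow> bool list \<Rightarrow> bool list" where
  "restrict_cols cols r = map (\<lambda>i. r ! i) cols"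

definition binary_OA :: "nat \<Rightarrow> nat \<Rightarrow> nat \<Rightarrow> bool list multiset \<Rightarrow> bool" where
  "binary_OA n M \<tau> A \<longleftrightarrow>
     (\<forall>r \<in># A. length r = n) \<and> size A = M \<and>
     (\<forall>cols. length cols = \<tau> \<and> sorted_wrt (<) cols \<and> set cols \<subseteq> {..<n} \<longrightarrow>
        (\<forall>t. length t = \<tau> \<longrightarrow>
           count (image_mset (restrict_cols cols) A) t * 2 ^ \<tau> = M))"

end

theory Submission
  imports Defs
begin


lemma count_image_size_filter:
  "count (image_mset f A) t = size (filter_mset (\<lambda>r. f r = t) A)"
  by (induction A) auto

lemma L4:
  assumes oa: "binary_OA 9 96 4 A" and T: "T \<subseteq> {..<9}" "card T = 4"
  shows "size (filter_mset (\<lambda>r. \<forall>i\<in>T. r!i = p i) A) = 6"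
proof -
  have fin: "finite T" using T(1) finite_subset by blast
  obtain cols where cs: "sorted_wrt (<) cols" "set cols = T"
    using ex1_sorted_list_for_set_if_finite[OF fin] by blast
  have "distinct cols" using cs(1) strict_sorted_iff by blast
  hence len: "length cols = 4" using cs(2) T(2) distinct_card by fastforce
  have "count (image_mset (restrict_cols cols) A) (map p cols) * 2^4 = 96"
    using oa len cs T(1) unfolding binary_OA_def by auto
  hence c: "count (image_mset (restrict_cols cols) A) (map p cols) = 6" by simp
  have eq: "(\<lambda>r. restrict_cols cols r = map p cols) = (\<lambda>r. \<forall>i\<in>T. r!i = p i)"
    using cs(2) by (auto simp: restrict_cols_def fun_eq_iff map_eq_conv)
  show ?thesis using c unfolding count_image_size_filter eq .
qed

lemma Lk:
  assumes oa: "binary_OA 9 96 4 A"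
  shows "T \<subseteq> {..<9} \<Longrightarrow> card T \<le> 4 \<Longrightarrow>
    size (filter_mset (\<lambda>r. \<forall>i\<in>T. r!i = p i) A) * 2 ^ card T = 96"
proof (induction "4 - card T" arbitrary: T p)
  case 0
  then have "card T = 4" by simp
  then show ?case using L4[OF oa 0(2)] by simp
next
  case (Suc n)
  have fin: "finite T" using Suc.prems(1) finite_subset by blast
  have "card T < 4" using Suc.hyps(2) by simp
  hence "T \<noteq> {..<9}" by auto
  then obtain j where j: "j < 9" "j \<notin> T" using Suc.prems(1) by auto
  let ?T = "insert j T"
  have T': "?T \<subseteq> {..<9}" "card ?T \<le> 4" "n = 4 - card ?T"
    using Suc j fin by auto
  have h1: "size (filter_mset (\<lambda>r. \<forall>i\<in>?T. r!i = p i) A) * 2 ^ card ?T = 96"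
    using Suc.hyps(1)[OF T'(3) T'(1,2)] .
  have h2: "size (filter_mset (\<lambda>r. \<forall>i\<in>?T. r!i = (p(j := \<not> p j)) i) A) * 2 ^ card ?T = 96"
    using Suc.hyps(1)[OF T'(3) T'(1,2)] .
  have split: "filter_mset (\<lambda>r. \<forall>i\<in>T. r!i = p i) A =
      filter_mset (\<lambda>r. \<forall>i\<in>?T. r!i = p i) A + filter_mset (\<lambda>r. \<forall>i\<in>?T. r!i = (p(j := \<not> p j)) i) A"
    by (rule multiset_eqI) (use j in \<open>auto simp: count_filter_mset\<close>)
  have "card ?T = Suc (card T)" using fin j by simp
  then show ?case using h1 h2 unfolding split by (simp add: algebra_simps)
qed



lemma sum_mset_sum_swap:
  "(\<Sum>x\<in>#A. \<Sum>T\<in>S. g x T) = (\<Sum>T\<in>S. \<Sum>x\<in>#A. g x T)"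
  by (induction A) (auto simp: sum.distrib)

lemma sum_mset_indicator_mult:
  "(\<Sum>x\<in>#A. (if P x then 1 else 0) * c) = size (filter_mset P A) * (c::nat)"
  by (induction A) (auto simp: algebra_simps)

lemma CT:
  assumes oa: "binary_OA 9 96 4 A" and X: "X \<subseteq> {..<9}" and k: "k \<le> 4"
  shows "(\<Sum>r\<in>#A. (card {i\<in>X. r!i = p i} choose k) * 2^k) = (card X choose k) * 96"
proof -
  have fin: "finite X" using X finite_subset by blast
  define TT where "TT = {T. T \<subseteq> X \<and> card T = k}"
  have finTT: "finite TT" unfolding TT_def by (rule finite_subset[of _ "Pow X"]) (auto simp: fin)
  have cTT: "card TT = card X choose k" unfolding TT_def using n_subsets[OF fin] by simp
  have pt: "card {i\<in>X. r!i = p i} choose k = (\<Sum>T\<in>TT. if \<forall>i\<in>T. r!i = p i then 1 else 0)" for r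
  proof -
    have f2: "finite {i\<in>X. r!i = p i}" using fin by simp
    have "card {i\<in>X. r!i = p i} choose k = card {T. T \<subseteq> {i\<in>X. r!i = p i} \<and> card T = k}"
      using n_subsets[OF f2] by simp
    also have "{T. T \<subseteq> {i\<in>X. r!i = p i} \<and> card T = k} = {T\<in>TT. \<forall>i\<in>T. r!i = p i}"
      unfolding TT_def by auto
    also have "card \<dots> = (\<Sum>T\<in>TT. if \<forall>i\<in>T. r!i = p i then 1 else 0)"
      using finTT by (simp add: sum.inter_filter[symmetric])
    finally show ?thesis .
  qed
  have "(\<Sum>r\<in>#A. (card {i\<in>X. r!i = p i} choose k) * 2^k)
      = (\<Sum>r\<in>#A. \<Sum>T\<in>TT. (if \<forall>i\<in>T. r!i = p i then 1 else 0) * 2^k)"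
    by (simp add: pt sum_distrib_right)
  also have "\<dots> = (\<Sum>T\<in>TT. \<Sum>r\<in>#A. (if \<forall>i\<in>T. r!i = p i then 1 else 0) * 2^k)"
    by (rule sum_mset_sum_swap)
  also have "\<dots> = (\<Sum>T\<in>TT. size (filter_mset (\<lambda>r. \<forall>i\<in>T. r!i = p i) A) * 2^k)"
    by (simp only: sum_mset_indicator_mult)
  also have "\<dots> = (\<Sum>T\<in>TT. 96)"
  proof (rule sum.cong)
    fix T assume "T \<in> TT"
    hence T: "T \<subseteq> {..<9}" "card T = k" using X unfolding TT_def by auto
    have "size (filter_mset (\<lambda>r. \<forall>i\<in>T. r!i = p i) A) * 2 ^ card T = 96"
      using Lk[OF oa T(1)] T(2) k by simp
    thus "size (filter_mset (\<lambda>r. \<forall>i\<in>T. r!i = p i) A) * 2^k = 96"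
      using T(2) by simp
  qed simp
  also have "\<dots> = (card X choose k) * 96" using cTT by simp
  finally show ?thesis .
qed



lemma le9_cases: "(z::nat) \<le> 9 \<Longrightarrow> z = 0 \<or> z = 1 \<or> z = 2 \<or> z = 3 \<or> z = 4 \<or> z = 5 \<or> z = 6 \<or> z = 7 \<or> z = 8 \<or> z = 9"
  by auto
lemma le8_cases: "(z::nat) \<le> 8 \<Longrightarrow> z = 0 \<or> z = 1 \<or> z = 2 \<or> z = 3 \<or> z = 4 \<or> z = 5 \<or> z = 6 \<or> z = 7 \<or> z = 8"
  by auto
lemma le7_cases: "(z::nat) \<le> 7 \<Longrightarrow> z = 0 \<or> z = 1 \<or> z = 2 \<or> z = 3 \<or> z = 4 \<or> z = 5 \<or> z = 6 \<or> z = 7"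
  by auto

lemma sum_mset_diff_int:
  "(\<Sum>r\<in>#A. f r - g r) = (\<Sum>r\<in>#A. f r) - (\<Sum>r\<in>#A. (g r :: int))"
  by (induction A) auto

lemma dvd_sum_mset:
  "(\<And>r. r \<in># A \<Longrightarrow> (M::int) dvd f r) \<Longrightarrow> M dvd (\<Sum>r\<in>#A. f r)"
  by (induction A) auto

lemma LinSum:
  assumes oa: "binary_OA 9 96 4 A" and X: "X \<subseteq> {..<9}"
  shows "(\<Sum>r\<in>#A. g0 + g1*2*int(card {i\<in>X. r!i = p i} choose 1) + g2*4*int(card {i\<in>X. r!i = p i} choose 2)
            + g3*8*int(card {i\<in>X. r!i = p i} choose 3) + g4*16*int(card {i\<in>X. r!i = p i} choose 4))
         = 96 * (g0 + g1*int(card X choose 1) + g2*int(card X choose 2) + g3*int(card X choose 3) + g4*int(card X choose 4))"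
proof -
  define a where "a r = card {i\<in>X. r!i = p i}" for r
  have ck: "(\<Sum>r\<in>#A. int(a r choose k) * 2^k) = int(card X choose k) * 96" if "k \<le> 4" for k
  proof -
    have "int (\<Sum>r\<in>#A. (a r choose k) * 2^k) = int ((card X choose k) * 96)"
      using CT[OF oa X that, of p] unfolding a_def by simp
    thus ?thesis by (simp add: multiset.map_comp comp_def)
  qed
  have e: "(\<Sum>r\<in>#A. g0 + g1*2*int(a r choose 1) + g2*4*int(a r choose 2)
            + g3*8*int(a r choose 3) + g4*16*int(a r choose 4))
       = g0 * (\<Sum>r\<in>#A. int(a r choose 0) * 2^0) + g1 * (\<Sum>r\<in>#A. int(a r choose 1) * 2^1)
         + g2 * (\<Sum>r\<in>#A. int(a r choose 2) * 2^2) + g3 * (\<Sum>r\<in>#A. int(a r choose 3) * 2^3)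
         + g4 * (\<Sum>r\<in>#A. int(a r choose 4) * 2^4)"
    by (induction A) (simp_all add: algebra_simps)
  have s: "size A = 96" using oa unfolding binary_OA_def by simp
  show ?thesis unfolding a_def[symmetric] e using ck[of 0] ck[of 1] ck[of 2] ck[of 3] ck[of 4]
    by (simp add: algebra_simps)
qed

lemma G:
  assumes oa: "binary_OA 9 96 4 A" and X: "X \<subseteq> {..<9}"
    and h: "\<And>z. z \<le> card X \<Longrightarrow> M dvd (h z - (g0 + g1*2*int(z choose 1) + g2*4*int(z choose 2)
            + g3*8*int(z choose 3) + g4*16*int(z choose 4)))"
  shows "M dvd ((\<Sum>r\<in>#A. h (card {i\<in>X. r!i = False})) -
           96 * (g0 + g1*int(card X choose 1) + g2*int(card X choose 2) + g3*int(card X choose 3) + g4*int(card X choose 4)))"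
proof -
  define a where "a r = card {i\<in>X. r!i = False}" for r
  define P where "P z = g0 + g1*2*int(z choose 1) + g2*4*int(z choose 2)
            + g3*8*int(z choose 3) + g4*16*int(z choose 4)" for z
  have fin: "finite X" using X finite_subset by blast
  have L: "(\<Sum>r\<in>#A. P (a r)) = 96 * (g0 + g1*int(card X choose 1) + g2*int(card X choose 2) + g3*int(card X choose 3) + g4*int(card X choose 4))"
    unfolding P_def a_def using LinSum[OF oa X, of g0 g1 "\<lambda>_. False" g2 g3 g4] by simp
  have "M dvd (\<Sum>r\<in>#A. h (a r) - P (a r))"
  proof (rule dvd_sum_mset)
    fix r
    have "a r \<le> card X" unfolding a_def using fin by (simp add: card_mono)
    thus "M dvd h (a r) - P (a r)" using h unfolding P_def by blast
  qed
  thus ?thesis unfolding sum_mset_diff_int L[symmetric] a_def .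
qed



definition eps :: "bool list \<Rightarrow> nat \<Rightarrow> int" where "eps r i = (if r!i then -1 else 1)"
definition sg :: "nat set \<Rightarrow> bool list \<Rightarrow> int" where "sg X r = (\<Prod>i\<in>X. eps r i)"
definition FF :: "bool list multiset \<Rightarrow> nat set \<Rightarrow> int" where "FF A X = (\<Sum>r\<in>#A. sg X r)"

lemma eps_sq: "eps r i * eps r i = 1" by (simp add: eps_def)

lemma sg_remove: assumes "finite X" "l \<in> X" shows "sg (X - {l}) r = sg X r * eps r l"
proof -
  have "sg X r = eps r l * sg (X - {l}) r" unfolding sg_def using prod.remove[OF assms] by simp
  hence "sg X r * eps r l = (eps r l * eps r l) * sg (X - {l}) r" by (simp add: algebra_simps)
  thus ?thesis using eps_sq by simp
qed

lemma card_split: "finite X \<Longrightarrow> card {i\<in>X. P i} = card X - card {i\<in>X. \<not> P i}"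
proof -
  assume f: "finite X"
  have "{i\<in>X. P i} = X - {i\<in>X. \<not> P i}" by auto
  thus ?thesis using f by (simp add: card_Diff_subset)
qed

lemma card_split2: "finite X \<Longrightarrow> card {i\<in>X. P i} + card {i\<in>X. \<not> P i} = card X"
proof -
  assume f: "finite X"
  have "card ({i\<in>X. P i} \<union> {i\<in>X. \<not> P i}) = card {i\<in>X. P i} + card {i\<in>X. \<not> P i}"
    using f by (intro card_Un_disjoint) auto
  moreover have "{i\<in>X. P i} \<union> {i\<in>X. \<not> P i} = X" by auto
  ultimately show ?thesis by simp
qed

lemma sg_pow: assumes "finite X" shows "sg X r = (-1) ^ (card X - card {i\<in>X. r!i = False})"
proof -
  have "sg X r = (\<Prod>i\<in>X. if r!i then -1 else 1)" unfolding sg_def eps_def ..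
  also have "\<dots> = (\<Prod>i\<in>X \<inter> {i. r!i}. -1) * (\<Prod>i\<in>X \<inter> - {i. r!i}. 1)"
    by (rule prod.If_cases[OF assms])
  also have "\<dots> = (-1) ^ card {i\<in>X. r!i}" by (simp add: Collect_conj_eq Int_commute)
  also have "card {i\<in>X. r!i} = card X - card {i\<in>X. r!i = False}"
    using card_split[OF assms, of "\<lambda>i. r!i"] by simp
  finally show ?thesis .
qed

lemma sum_eps: assumes "finite X"
  shows "(\<Sum>i\<in>X. eps r i) = 2 * int (card {i\<in>X. r!i = False}) - int (card X)"
proof -
  have "(\<Sum>i\<in>X. eps r i) = (\<Sum>i\<in>X. if r!i then -1 else 1)" unfolding eps_def ..
  also have "\<dots> = (\<Sum>i\<in>X \<inter> {i. r!i}. -1) + (\<Sum>i\<in>X \<inter> - {i. r!i}. 1)"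
    by (rule sum.If_cases[OF assms])
  also have "\<dots> = int (card {i\<in>X. \<not> r!i}) - int (card {i\<in>X. r!i})"
    by (simp add: Collect_conj_eq Int_commute Collect_neg_eq)
  finally show ?thesis using card_split2[OF assms, of "\<lambda>i. r!i"] by simp
qed



lemma dvd_from_diff: "(m::int) dvd (S - c) \<Longrightarrow> c = m * k \<Longrightarrow> m dvd S"
proof -
  assume a: "m dvd (S - c)" "c = m * k"
  have "S = (S - c) + m * k" using a(2) by simp
  thus ?thesis using a(1) by (metis dvd_add dvd_triv_left)
qed

lemma FF_pow: assumes "finite X"
  shows "FF A X = (\<Sum>r\<in>#A. (-1) ^ (card X - card {i\<in>X. r!i = False}))"
  unfolding FF_def by (rule arg_cong[where f=sum_mset], rule image_mset_cong, rule sg_pow[OF assms])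

lemma D8:
  assumes oa: "binary_OA 9 96 4 A" and X: "X \<subseteq> {..<9}" "card X = 8"
  shows "32 dvd FF A X"
proof -
  have fin: "finite X" using X finite_subset by blast
  have h: "(32::int) dvd ((-1)^(8-z) - (1 + (-1)*2*int(z choose 1) + 1*4*int(z choose 2)
            + (-1)*8*int(z choose 3) + 1*16*int(z choose 4)))" if "z \<le> card X" for z
    using that X(2) by (simp only:) (drule le8_cases, elim disjE, (hypsubst, code_simp)+)
  have "32 dvd ((\<Sum>r\<in>#A. (-1::int)^(8 - card {i\<in>X. r!i = False})) -
           96 * (1 + (-1)*int(card X choose 1) + 1*int(card X choose 2) + (-1)*int(card X choose 3) + 1*int(card X choose 4)))"
    by (rule G[OF oa X(1)]) (rule h)
  moreover have "96 * (1 + (-1)*int(card X choose 1) + 1*int(card X choose 2) + (-1)*int(card X choose 3) + 1*int(card X choose 4)) = 32 * 105"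
    unfolding X(2) by code_simp
  ultimately have "32 dvd (\<Sum>r\<in>#A. (-1::int)^(8 - card {i\<in>X. r!i = False}))"
    using dvd_from_diff by blast
  thus ?thesis using FF_pow[OF fin, of A] X(2) by simp
qed

lemma D7:
  assumes oa: "binary_OA 9 96 4 A" and X: "X \<subseteq> {..<9}" "card X = 7"
  shows "32 dvd FF A X"
proof -
  have fin: "finite X" using X finite_subset by blast
  have h: "(32::int) dvd ((-1)^(7-z) - ((-1) + 1*2*int(z choose 1) + (-1)*4*int(z choose 2)
            + 1*8*int(z choose 3) + (-1)*16*int(z choose 4)))" if "z \<le> card X" for z
    using that X(2) by (simp only:) (drule le7_cases, elim disjE, (hypsubst, code_simp)+)
  have "32 dvd ((\<Sum>r\<in>#A. (-1::int)^(7 - card {i\<in>X. r!i = False})) -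
           96 * ((-1) + 1*int(card X choose 1) + (-1)*int(card X choose 2) + 1*int(card X choose 3) + (-1)*int(card X choose 4)))"
    by (rule G[OF oa X(1)]) (rule h)
  moreover have "96 * ((-1) + 1*int(card X choose 1) + (-1)*int(card X choose 2) + 1*int(card X choose 3) + (-1)*int(card X choose 4)) = 32 * (-45)"
    unfolding X(2) by code_simp
  ultimately have "32 dvd (\<Sum>r\<in>#A. (-1::int)^(7 - card {i\<in>X. r!i = False}))"
    using dvd_from_diff by blast
  thus ?thesis using FF_pow[OF fin, of A] X(2) by simp
qed



lemma PP:
  assumes oa: "binary_OA 9 96 4 A" and i: "i < 9"
  shows "64 dvd (FF A ({..<9} - {i}) + (\<Sum>l\<in>{..<9} - {i}. FF A ({..<9} - {i} - {l})) + 8160)"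
proof -
  define Y where "Y = {..<(9::nat)} - {i}"
  have finY: "finite Y" and cY: "card Y = 8" and YU: "Y \<subseteq> {..<9}" unfolding Y_def using i by auto
  define a where "a r = card {i\<in>Y. r!i = False}" for r
  have pt: "sg Y r + (\<Sum>l\<in>Y. sg (Y - {l}) r) = (-1)^(8 - a r) * (2 * int (a r) - 7)" for r
  proof -
    have "(\<Sum>l\<in>Y. sg (Y - {l}) r) = (\<Sum>l\<in>Y. sg Y r * eps r l)"
      using sg_remove[OF finY] by (intro sum.cong) auto
    also have "\<dots> = sg Y r * (\<Sum>l\<in>Y. eps r l)" by (simp add: sum_distrib_left)
    also have "\<dots> = sg Y r * (2 * int (a r) - 8)" using sum_eps[OF finY, of r] cY unfolding a_def by simp
    finally have "sg Y r + (\<Sum>l\<in>Y. sg (Y - {l}) r) = sg Y r * (2 * int (a r) - 7)"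
      by (simp add: algebra_simps)
    thus ?thesis using sg_pow[OF finY, of r] cY unfolding a_def by simp
  qed
  have "FF A Y + (\<Sum>l\<in>Y. FF A (Y - {l})) = (\<Sum>r\<in>#A. sg Y r) + (\<Sum>r\<in>#A. \<Sum>l\<in>Y. sg (Y - {l}) r)"
    unfolding FF_def by (simp add: sum_mset_sum_swap)
  also have "\<dots> = (\<Sum>r\<in>#A. sg Y r + (\<Sum>l\<in>Y. sg (Y - {l}) r))"
    by (simp add: sum_mset.distrib)
  also have "\<dots> = (\<Sum>r\<in>#A. (-1)^(8 - a r) * (2 * int (a r) - 7))"
    using pt by simp
  finally have eq: "FF A Y + (\<Sum>l\<in>Y. FF A (Y - {l})) = (\<Sum>r\<in>#A. (-1)^(8 - a r) * (2 * int (a r) - 7))" .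
  have h: "(64::int) dvd ((-1)^(8-z) * (2 * int z - 7) - ((-7) + 6*2*int(z choose 1) + (-5)*4*int(z choose 2)
            + 4*8*int(z choose 3) + (-3)*16*int(z choose 4)))" if "z \<le> card Y" for z
    using that cY by (simp only:) (drule le8_cases, elim disjE, (hypsubst, code_simp)+)
  have "64 dvd ((\<Sum>r\<in>#A. (-1::int)^(8 - card {i\<in>Y. r!i = False}) * (2 * int (card {i\<in>Y. r!i = False}) - 7)) -
           96 * ((-7) + 6*int(card Y choose 1) + (-5)*int(card Y choose 2) + 4*int(card Y choose 3) + (-3)*int(card Y choose 4)))"
    by (rule G[OF oa YU]) (rule h)
  moreover have "96 * ((-7) + 6*int(card Y choose 1) + (-5)*int(card Y choose 2) + 4*int(card Y choose 3) + (-3)*int(card Y choose 4)) = -8160"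
    unfolding cY by code_simp
  ultimately have "64 dvd ((\<Sum>r\<in>#A. (-1::int)^(8 - card {i\<in>Y. r!i = False}) * (2 * int (card {i\<in>Y. r!i = False}) - 7)) - (-8160))"
    by (simp only:)
  hence "64 dvd ((\<Sum>r\<in>#A. (-1)^(8 - a r) * (2 * int (a r) - 7)) + 8160)"
    unfolding a_def by (simp only: diff_minus_eq_add)
  thus ?thesis unfolding eq[symmetric] Y_def .
qed



lemma swap2:
  "(\<Sum>j\<in>S. \<Sum>x\<in>#A. \<Sum>y\<in>#B. g j x y) = (\<Sum>x\<in>#A. \<Sum>y\<in>#B. \<Sum>j\<in>S. g j x y)"
  by (simp add: sum_mset_sum_swap)

lemma FF_sq: "(FF A X)^2 = (\<Sum>x\<in>#A. \<Sum>y\<in>#A. sg X x * sg X y)"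
  unfolding FF_def power2_eq_square by (simp add: sum_mset_distrib_left sum_mset_distrib_right mult.commute)

lemma le_sum_mset_member:
  assumes "x \<in># A" "\<And>y. (f y::int) \<ge> 0" shows "f x \<le> (\<Sum>y\<in>#A. f y)"
proof -
  have "A = add_mset x (A - {#x#})" using assms(1) by simp
  hence "(\<Sum>y\<in>#A. f y) = f x + (\<Sum>y\<in>#(A - {#x#}). f y)"
    by (metis image_mset_add_mset sum_mset.add_mset)
  moreover have "(\<Sum>y\<in>#(A - {#x#}). f y) \<ge> 0"
    using sum_mset_mono[of "A - {#x#}" "\<lambda>_. 0" f] assms(2) by simp
  ultimately show ?thesis by simp
qed

lemma card_split3: "finite U \<Longrightarrow> card (U \<inter> {j. P j}) + card (U \<inter> - {j. P j}) = card U"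
proof -
  assume f: "finite U"
  have "card ((U \<inter> {j. P j}) \<union> (U \<inter> - {j. P j})) = card (U \<inter> {j. P j}) + card (U \<inter> - {j. P j})"
    using f by (intro card_Un_disjoint) auto
  moreover have "(U \<inter> {j. P j}) \<union> (U \<inter> - {j. P j}) = U" by auto
  ultimately show ?thesis by simp
qed

lemma eps_prod: "eps x j * eps y j = (if y!j = x!j then 1 else -1)"
  unfolding eps_def by auto

lemma Phi_pt:
  fixes x y :: "bool list"
  defines "U \<equiv> {..<(9::nat)}"
  defines "a \<equiv> card {i\<in>U. y!i = x!i}"
  shows "2 * (\<Sum>j\<in>U. sg (U - {j}) x * sg (U - {j}) y)
        + (\<Sum>j\<in>U. \<Sum>l\<in>U - {j}. sg (U - {j} - {l}) x * sg (U - {j} - {l}) y)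
        = (-1)^(9 - a) * (2 * (2 * int a - 9) + (2 * int a - 9)^2 - 9)"
proof -
  have finU: "finite U" and cU: "card U = 9" unfolding U_def by auto
  define e where "e j = eps x j * eps y j" for j
  define pi where "pi = sg U x * sg U y"
  define E where "E = (\<Sum>j\<in>U. e j)"
  have e2: "e j * e j = 1" for j unfolding e_def eps_def by auto
  have s1: "sg (U - {j}) x * sg (U - {j}) y = pi * e j" if "j \<in> U" for j
    using sg_remove[OF finU that] unfolding pi_def e_def by (simp add: algebra_simps)
  have s2: "sg (U - {j} - {l}) x * sg (U - {j} - {l}) y = pi * e j * e l" if "j \<in> U" "l \<in> U - {j}" for j l
  proof -
    have f: "finite (U - {j})" using finU by simp
    show ?thesis using sg_remove[OF f that(2)] sg_remove[OF finU that(1)] unfolding pi_def e_def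
      by (simp add: algebra_simps)
  qed
  have inner: "(\<Sum>l\<in>U - {j}. e l) = E - e j" if "j \<in> U" for j
    unfolding E_def using sum.remove[OF finU that, of e] by simp
  have "(\<Sum>j\<in>U. \<Sum>l\<in>U - {j}. sg (U - {j} - {l}) x * sg (U - {j} - {l}) y)
        = (\<Sum>j\<in>U. \<Sum>l\<in>U - {j}. pi * e j * e l)"
    using s2 by (intro sum.cong) auto
  also have "\<dots> = (\<Sum>j\<in>U. pi * e j * (E - e j))"
    using inner by (intro sum.cong) (auto simp: sum_distrib_left[symmetric])
  also have "\<dots> = pi * (E * E - (\<Sum>j\<in>U. e j * e j))"
    unfolding E_def by (simp add: algebra_simps sum_subtractf sum_distrib_left sum_distrib_right)
  also have "\<dots> = pi * (E * E - 9)" using e2 cU by simp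
  finally have P2: "(\<Sum>j\<in>U. \<Sum>l\<in>U - {j}. sg (U - {j} - {l}) x * sg (U - {j} - {l}) y) = pi * (E * E - 9)" .
  have P1: "(\<Sum>j\<in>U. sg (U - {j}) x * sg (U - {j}) y) = pi * E"
    unfolding E_def using s1 by (simp add: sum_distrib_left)
  have Ea: "E = 2 * int a - 9"
  proof -
    have "E = (\<Sum>j\<in>U. if y!j = x!j then 1 else -1)" unfolding E_def e_def eps_prod ..
    also have "\<dots> = (\<Sum>j\<in>U \<inter> {j. y!j = x!j}. 1) + (\<Sum>j\<in>U \<inter> - {j. y!j = x!j}. -1)"
      by (rule sum.If_cases[OF finU])
    also have "\<dots> = int (card (U \<inter> {j. y!j = x!j})) - int (card (U \<inter> - {j. y!j = x!j}))"
      by simp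
    finally show ?thesis using card_split3[OF finU, of "\<lambda>j. y!j = x!j"] cU unfolding a_def
      by (simp add: Collect_conj_eq Int_commute)
  qed
  have pia: "pi = (-1)^(9 - a)"
  proof -
    have "pi = (\<Prod>j\<in>U. e j)" unfolding pi_def sg_def e_def by (simp add: prod.distrib)
    also have "\<dots> = (\<Prod>j\<in>U. if y!j = x!j then 1 else -1)" unfolding e_def eps_prod ..
    also have "\<dots> = (\<Prod>j\<in>U \<inter> {j. y!j = x!j}. 1) * (\<Prod>j\<in>U \<inter> - {j. y!j = x!j}. -1)"
      by (rule prod.If_cases[OF finU])
    also have "\<dots> = (-1) ^ card (U \<inter> - {j. y!j = x!j})"
      by simp
    also have "card (U \<inter> - {j. y!j = x!j}) = 9 - a"
      using card_split3[OF finU, of "\<lambda>j. y!j = x!j"] cU unfolding a_def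
      by (simp add: Collect_conj_eq Int_commute)
    finally show ?thesis .
  qed
  show ?thesis unfolding P1 P2 Ea pia by (simp add: algebra_simps power2_eq_square)
qed



lemma pi_pt:
  "sg {..<9} x * sg {..<9} y = (-1) ^ (9 - card {i\<in>{..<(9::nat)}. y!i = x!i})"
proof -
  define U where "U = {..<(9::nat)}"
  have finU: "finite U" and cU: "card U = 9" unfolding U_def by auto
  have "sg U x * sg U y = (\<Prod>j\<in>U. eps x j * eps y j)" unfolding sg_def by (simp add: prod.distrib)
  also have "\<dots> = (\<Prod>j\<in>U. if y!j = x!j then 1 else -1)" unfolding eps_prod ..
  also have "\<dots> = (\<Prod>j\<in>U \<inter> {j. y!j = x!j}. 1) * (\<Prod>j\<in>U \<inter> - {j. y!j = x!j}. -1)"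
    by (rule prod.If_cases[OF finU])
  also have "\<dots> = (-1) ^ card (U \<inter> - {j. y!j = x!j})" by simp
  also have "card (U \<inter> - {j. y!j = x!j}) = 9 - card {i\<in>U. y!i = x!i}"
    using card_split3[OF finU, of "\<lambda>j. y!j = x!j"] cU by (simp add: Collect_conj_eq Int_commute)
  finally show ?thesis unfolding U_def .
qed

lemma num_ineq: "(a::nat) \<le> 9 \<Longrightarrow>
  (-1)^(9 - a) * (2 * (2 * int a - 9) + (2 * int a - 9)^2 - 9)
   \<le> (198 + (-84)*2*int(a choose 1) + 32*4*int(a choose 2) + (-10)*8*int(a choose 3) + 2*16*int(a choose 4))
      - 4 * (-1)^(9 - a) - 512 * (if a = 9 then 1 else 0)"
  by (drule le9_cases, elim disjE, (hypsubst, code_simp)+)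

lemma Qb:
  assumes oa: "binary_OA 9 96 4 A"
  shows "2 * (\<Sum>j\<in>{..<9}. (FF A ({..<9} - {j}))^2)
        + (\<Sum>j\<in>{..<9}. \<Sum>l\<in>{..<9} - {j}. (FF A ({..<9} - {j} - {l}))^2) \<le> 6144"
proof -
  define U where "U = {..<(9::nat)}"
  have finU: "finite U" and cU: "card U = 9" unfolding U_def by auto
  have sA: "size A = 96" using oa unfolding binary_OA_def by simp
  define a where "a x y = card {i\<in>U. y!i = x!i}" for x y :: "bool list"
  define Phi where "Phi x y = 2 * (\<Sum>j\<in>U. sg (U - {j}) x * sg (U - {j}) y)
        + (\<Sum>j\<in>U. \<Sum>l\<in>U - {j}. sg (U - {j} - {l}) x * sg (U - {j} - {l}) y)" for x y
  define Poly where "Poly (z::nat) = (198 + (-84)*2*int(z choose 1) + 32*4*int(z choose 2) + (-10)*8*int(z choose 3) + 2*16*int(z choose 4))" for z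
  define pi where "pi x y = sg U x * sg U y" for x y
  define ind where "ind x y = (if a x y = 9 then 1 else (0::int))" for x y
  have h1: "(\<Sum>j\<in>U. (FF A (U - {j}))^2) = (\<Sum>x\<in>#A. \<Sum>y\<in>#A. \<Sum>j\<in>U. sg (U - {j}) x * sg (U - {j}) y)"
    by (simp only: FF_sq swap2)
  have h2: "(\<Sum>j\<in>U. \<Sum>l\<in>U - {j}. (FF A (U - {j} - {l}))^2) =
      (\<Sum>x\<in>#A. \<Sum>y\<in>#A. \<Sum>j\<in>U. \<Sum>l\<in>U - {j}. sg (U - {j} - {l}) x * sg (U - {j} - {l}) y)"
    by (simp only: FF_sq swap2)
  have L: "2 * (\<Sum>j\<in>U. (FF A (U - {j}))^2) + (\<Sum>j\<in>U. \<Sum>l\<in>U - {j}. (FF A (U - {j} - {l}))^2)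
        = (\<Sum>x\<in>#A. \<Sum>y\<in>#A. Phi x y)"
    unfolding h1 h2 Phi_def by (simp add: sum_mset.distrib sum_mset_distrib_left)
  have pt: "Phi x y \<le> Poly (a x y) - 4 * pi x y - 512 * ind x y" for x y
  proof -
    have "a x y \<le> 9" unfolding a_def using card_mono[OF finU, of "{i\<in>U. y!i = x!i}"] cU by auto
    moreover have "Phi x y = (-1)^(9 - a x y) * (2 * (2 * int (a x y) - 9) + (2 * int (a x y) - 9)^2 - 9)"
      unfolding Phi_def a_def U_def by (rule Phi_pt)
    moreover have "pi x y = (-1)^(9 - a x y)" unfolding pi_def a_def U_def by (rule pi_pt)
    ultimately show ?thesis unfolding Poly_def ind_def using num_ineq by presburger
  qed
  have S1: "(\<Sum>x\<in>#A. \<Sum>y\<in>#A. Phi x y) \<le> (\<Sum>x\<in>#A. \<Sum>y\<in>#A. Poly (a x y) - 4 * pi x y - 512 * ind x y)"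
    using pt by (intro sum_mset_mono) auto
  have S2: "(\<Sum>x\<in>#A. \<Sum>y\<in>#A. Poly (a x y) - 4 * pi x y - 512 * ind x y)
      = (\<Sum>x\<in>#A. \<Sum>y\<in>#A. Poly (a x y)) - 4 * (\<Sum>x\<in>#A. \<Sum>y\<in>#A. pi x y) - 512 * (\<Sum>x\<in>#A. \<Sum>y\<in>#A. ind x y)"
    by (simp add: sum_mset_diff_int sum_mset_distrib_left)
  have PolyS: "(\<Sum>y\<in>#A. Poly (a x y)) = 576" for x
  proof -
    have "(\<Sum>y\<in>#A. Poly (a x y)) = 96 * (198 + (-84)*int(card U choose 1) + 32*int(card U choose 2) + (-10)*int(card U choose 3) + 2*int(card U choose 4))"
      unfolding Poly_def a_def using LinSum[OF oa, of U 198 "-84" "\<lambda>i. x!i" 32 "-10" 2] U_def by simp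
    also have "\<dots> = 576" unfolding cU by code_simp
    finally show ?thesis .
  qed
  have P1: "(\<Sum>x\<in>#A. \<Sum>y\<in>#A. Poly (a x y)) = 55296" using PolyS sA by simp
  have P2: "(\<Sum>x\<in>#A. \<Sum>y\<in>#A. pi x y) \<ge> 0" unfolding pi_def using FF_sq[of A U] by (metis zero_le_power2)
  have P3: "(\<Sum>x\<in>#A. \<Sum>y\<in>#A. ind x y) \<ge> 96"
  proof -
    have "(\<Sum>x\<in>#A. (1::int)) \<le> (\<Sum>x\<in>#A. \<Sum>y\<in>#A. ind x y)"
    proof (rule sum_mset_mono)
      fix x assume x: "x \<in># A"
      have "ind x x = 1" unfolding ind_def a_def using cU by simp
      moreover have "ind x x \<le> (\<Sum>y\<in>#A. ind x y)"
        by (rule le_sum_mset_member[OF x]) (simp add: ind_def)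
      ultimately show "1 \<le> (\<Sum>y\<in>#A. ind x y)" by simp
    qed
    thus ?thesis using sA by simp
  qed
  have "2 * (\<Sum>j\<in>U. (FF A (U - {j}))^2) + (\<Sum>j\<in>U. \<Sum>l\<in>U - {j}. (FF A (U - {j} - {l}))^2) \<le> 6144"
    unfolding L using S1 S2 P1 P2 P3 by linarith
  thus ?thesis unfolding U_def .
qed



lemma sq32: assumes "(32::int) dvd v" shows "1024 * (if v \<noteq> 0 then 1 else 0) \<le> v^2"
proof -
  obtain k where k: "v = 32 * k" using assms by (auto elim: dvdE)
  show ?thesis
  proof (cases "k = 0")
    case True thus ?thesis using k by simp
  next
    case False
    hence "1 \<le> \<bar>k\<bar>" by simp
    hence "1 * 1 \<le> \<bar>k\<bar> * \<bar>k\<bar>" by (intro mult_mono) auto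
    hence "1 \<le> k * k" by (simp only: abs_mult_self_eq mult_1)
    thus ?thesis using k False by (simp add: power2_eq_square)
  qed
qed

theorem theorem4p1:
  shows "\<not> (\<exists>A. binary_OA 9 96 4 A)"
proof
  assume "\<exists>A. binary_OA 9 96 4 A"
  then obtain A where oa: "binary_OA 9 96 4 A" by blast
  define U where "U = {..<(9::nat)}"
  have finU: "finite U" and cU: "card U = 9" unfolding U_def by auto
  define F1 where "F1 j = FF A (U - {j})" for j
  define F2 where "F2 j l = FF A (U - {j} - {l})" for j l
  define I1 where "I1 j = (if F1 j \<noteq> 0 then 1 else (0::int))" for j
  define I2 where "I2 j l = (if F2 j l \<noteq> 0 then 1 else (0::int))" for j l
  have D1: "32 dvd F1 j" if "j \<in> U" for j
    unfolding F1_def by (rule D8[OF oa]) (use that cU finU in \<open>auto simp: U_def\<close>)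
  have D2: "32 dvd F2 j l" if "j \<in> U" "l \<in> U - {j}" for j l
  proof -
    have "card (U - {j} - {l}) = 7" using that cU finU by auto
    thus ?thesis unfolding F2_def by (intro D7[OF oa]) (auto simp: U_def)
  qed
  have cov: "1 \<le> I1 i + (\<Sum>l\<in>U - {i}. I2 i l)" if i: "i \<in> U" for i
  proof (rule ccontr)
    assume c: "\<not> 1 \<le> I1 i + (\<Sum>l\<in>U - {i}. I2 i l)"
    have nn1: "I1 i \<ge> 0" unfolding I1_def by simp
    have nn2: "\<forall>l\<in>U - {i}. I2 i l \<ge> 0" unfolding I2_def by simp
    hence s0: "(\<Sum>l\<in>U - {i}. I2 i l) \<ge> 0" using nn2 by (intro sum_nonneg) simp
    have "I1 i = 0" using c nn1 s0 unfolding I1_def by (auto split: if_splits)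
    hence f1: "F1 i = 0" unfolding I1_def by (auto split: if_splits)
    have "(\<Sum>l\<in>U - {i}. I2 i l) = 0" using c nn1 s0 \<open>I1 i = 0\<close> unfolding I2_def
      by (smt (verit) sum_nonneg)
    hence "\<forall>l\<in>U - {i}. I2 i l = 0" using sum_nonneg_eq_0_iff[of "U - {i}" "I2 i"] finU nn2 by auto
    hence f2: "\<forall>l\<in>U - {i}. F2 i l = 0" unfolding I2_def by (auto split: if_splits)
    have "64 dvd (F1 i + (\<Sum>l\<in>U - {i}. F2 i l) + 8160)"
      using PP[OF oa, of i] i unfolding F1_def F2_def U_def by simp
    moreover have "(\<Sum>l\<in>U - {i}. F2 i l) = 0" using f2 by simp
    ultimately have "(64::int) dvd 8160" using f1 by simp
    thus False by simp
  qed
  have C: "9 \<le> (\<Sum>i\<in>U. I1 i) + (\<Sum>i\<in>U. \<Sum>l\<in>U - {i}. I2 i l)"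
  proof -
    have "(\<Sum>i\<in>U. (1::int)) \<le> (\<Sum>i\<in>U. I1 i + (\<Sum>l\<in>U - {i}. I2 i l))"
      using cov by (intro sum_mono) auto
    thus ?thesis using cU by (simp add: sum.distrib)
  qed
  have Q: "2 * (\<Sum>j\<in>U. (F1 j)^2) + (\<Sum>j\<in>U. \<Sum>l\<in>U - {j}. (F2 j l)^2) \<le> 6144"
    using Qb[OF oa] unfolding F1_def F2_def U_def .
  have Q1: "(\<Sum>j\<in>U. 1024 * I1 j) \<le> (\<Sum>j\<in>U. (F1 j)^2)"
    using D1 sq32 unfolding I1_def by (intro sum_mono) auto
  have Q2: "(\<Sum>j\<in>U. \<Sum>l\<in>U - {j}. 1024 * I2 j l) \<le> (\<Sum>j\<in>U. \<Sum>l\<in>U - {j}. (F2 j l)^2)"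
    using D2 sq32 unfolding I2_def by (intro sum_mono) auto
  have nn: "(\<Sum>i\<in>U. I1 i) \<ge> 0" unfolding I1_def by (simp add: sum_nonneg)
  have "(\<Sum>j\<in>U. 1024 * I1 j) = 1024 * (\<Sum>j\<in>U. I1 j)" by (simp add: sum_distrib_left)
  moreover have "(\<Sum>j\<in>U. \<Sum>l\<in>U - {j}. 1024 * I2 j l) = 1024 * (\<Sum>j\<in>U. \<Sum>l\<in>U - {j}. I2 j l)"
    by (simp add: sum_distrib_left)
  ultimately have Q1': "1024 * (\<Sum>j\<in>U. I1 j) \<le> (\<Sum>j\<in>U. (F1 j)^2)"
      and Q2': "1024 * (\<Sum>j\<in>U. \<Sum>l\<in>U - {j}. I2 j l) \<le> (\<Sum>j\<in>U. \<Sum>l\<in>U - {j}. (F2 j l)^2)"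
    using Q1 Q2 by simp_all
  have ar: "\<And>s1 s2 q1 q2::int. 9 \<le> s1 + s2 \<Longrightarrow> 2 * q1 + q2 \<le> 6144 \<Longrightarrow> 1024 * s1 \<le> q1
      \<Longrightarrow> 1024 * s2 \<le> q2 \<Longrightarrow> 0 \<le> s1 \<Longrightarrow> False" by linarith
  show False by (rule ar[OF C Q Q1' Q2' nn])
qed


end
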